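(* Let $\mathit{VI}$ be a finite set of variables with $\#\mathit{VI}=n$ and $k\in\mathbb{N}$ with $1\le k\le n$. Then $\mathrm{dAtoms}(\mathit{TS}_k)=\{\,sh\in\mathrm{MI}(\mathit{TSD}_k)\mid \mathit{VI}\notin sh\,\}$.
   Context: $\mathit{SG}=\wp(\mathit{VI})\setminus\{\emptyset\}$, $\mathit{SH}=\wp(\mathit{SG})$ ordered by inclusion. $\mathrm{tuples}_k(S)=\{T\subseteq S\mid\#T=k\}$, $\mathrm{tuples}_k(sh)=\bigcup_{S'\in sh}\mathrm{tuples}_k(S')$, $\rho_{\mathit{TS}_k}(sh)=\{S\in\mathit{SG}\mid\mathrm{tuples}_k(S)\subseteq\mathrm{tuples}_k(sh)\}$, $\mathit{TS}_k=\rho_{\mathit{TS}_k}(\mathit{SH})$. $\rho_{\mathit{TSD}_k}(sh)=\{\,S\in\mathit{SG}\mid \forall T\subseteq S:\ \#T<k\implies S=\bigcup\{U\in sh\mid T\subseteq U\subseteq S\}\,\}$, $\mathit{TSD}_k=\rho_{\mathit{TSD}_k}(\mathit{SH})$. Both are complete lattices under inclusion with top $\mathit{SG}$. $\mathrm{MI}(C)$ denotes the meet-irreducible elements of a complete lattice $C$ ($x$ with $x=y\wedge z\Rightarrow x=y$ or $x=z$), and $\mathrm{dAtoms}(C)$ its dual-atoms ($x\ne\top$ with $x\le y<\top\Rightarrow x=y$). *)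

theory Defs
  imports Main
begin

definition SG :: "'a set \<Rightarrow> 'a set set" where
  "SG VI = Pow VI - {{}}"

definition SH :: "'a set \<Rightarrow> 'a set set set" where
  "SH VI = Pow (SG VI)"

definition tuples :: "nat \<Rightarrow> 'a set \<Rightarrow> 'a set set" where
  "tuples k S = {T. T \<subseteq> S \<and> card T = k}"

definition tuples_sh :: "nat \<Rightarrow> 'a set set \<Rightarrow> 'a set set" where
  "tuples_sh k sh = (\<Union>S'\<in>sh. tuples k S')"

definition rho_TS :: "'a set \<Rightarrow> nat \<Rightarrow> 'a set set \<Rightarrow> 'a set set" where
  "rho_TS VI k sh = {S \<in> SG VI. tuples k S \<subseteq> tuples_sh k sh}"

definition TS :: "'a set \<Rightarrow> nat \<Rightarrow> 'a set set set" where
  "TS VI k = rho_TS VI k ` SH VI"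

definition rho_TSD :: "'a set \<Rightarrow> nat \<Rightarrow> 'a set set \<Rightarrow> 'a set set" where
  "rho_TSD VI k sh = {S \<in> SG VI. \<forall>T. T \<subseteq> S \<longrightarrow> card T < k \<longrightarrow>
       S = \<Union>{U \<in> sh. T \<subseteq> U \<and> U \<subseteq> S}}"

definition TSD :: "'a set \<Rightarrow> nat \<Rightarrow> 'a set set set" where
  "TSD VI k = rho_TSD VI k ` SH VI"

definition is_meet_in :: "'b set set \<Rightarrow> 'b set \<Rightarrow> 'b set \<Rightarrow> 'b set \<Rightarrow> bool" where
  "is_meet_in C x y z \<longleftrightarrow> x \<in> C \<and> x \<subseteq> y \<and> x \<subseteq> z \<and>
     (\<forall>w\<in>C. w \<subseteq> y \<and> w \<subseteq> z \<longrightarrow> w \<subseteq> x)"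

definition MI :: "'b set set \<Rightarrow> 'b set set" where
  "MI C = {x \<in> C. \<forall>y\<in>C. \<forall>z\<in>C. is_meet_in C x y z \<longrightarrow> x = y \<or> x = z}"

definition dAtoms :: "'b set set \<Rightarrow> 'b set \<Rightarrow> 'b set set" where
  "dAtoms C tp = {x \<in> C. x \<noteq> tp \<and> (\<forall>y\<in>C. x \<subseteq> y \<and> y \<subset> tp \<longrightarrow> x = y)}"

end

theory Submission
  imports Defs
begin

definition DT :: "'a set \<Rightarrow> 'a set \<Rightarrow> 'a set set" where
  "DT VI T = {S \<in> SG VI. \<not> T \<subseteq> S}"

lemma SG_mem: "S \<in> SG VI \<longleftrightarrow> S \<subseteq> VI \<and> S \<noteq> {}"
  by (auto simp: SG_def)

lemma card_T_nonempty: "card T = k \<Longrightarrow> 1 \<le> k \<Longrightarrow> T \<noteq> {}"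
  by auto

lemma card_eq_sub: "finite VI \<Longrightarrow> T \<subseteq> T2 \<Longrightarrow> T2 \<subseteq> VI \<Longrightarrow> card T = card T2 \<Longrightarrow> T = T2"
  by (meson card_subset_eq finite_subset)

lemma DT_sub: "DT VI T \<subseteq> SG VI" by (auto simp: DT_def)

lemma DT_in_TS:
  assumes fin: "finite VI" and k1: "1 \<le> k" and T: "T \<subseteq> VI" "card T = k"
  shows "DT VI T \<in> TS VI k"
proof -
  have "rho_TS VI k (DT VI T) = DT VI T"
  proof (rule set_eqI, rule iffI)
    fix S assume S: "S \<in> rho_TS VI k (DT VI T)"
    hence SG: "S \<in> SG VI" and tp: "tuples k S \<subseteq> tuples_sh k (DT VI T)"
      by (auto simp: rho_TS_def)
    show "S \<in> DT VI T"
    proof (rule ccontr)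
      assume "S \<notin> DT VI T"
      hence "T \<subseteq> S" using SG by (auto simp: DT_def)
      hence "T \<in> tuples k S" using T by (auto simp: tuples_def)
      with tp obtain S' where "S' \<in> DT VI T" "T \<subseteq> S'"
        by (auto simp: tuples_sh_def tuples_def)
      thus False by (auto simp: DT_def)
    qed
  next
    fix S assume S: "S \<in> DT VI T"
    hence "S \<in> SG VI" by (auto simp: DT_def)
    moreover have "tuples k S \<subseteq> tuples_sh k (DT VI T)"
      using S by (auto simp: tuples_sh_def)
    ultimately show "S \<in> rho_TS VI k (DT VI T)" by (auto simp: rho_TS_def)
  qed
  moreover have "DT VI T \<in> SH VI" using DT_sub by (auto simp: SH_def)
  ultimately show ?thesis unfolding TS_def by (metis image_eqI)
qed

lemma TS_sub_SG: "y \<in> TS VI k \<Longrightarrow> y \<subseteq> SG VI"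
  by (auto simp: TS_def rho_TS_def)

lemma TS_notin:
  assumes fin: "finite VI" and k1: "1 \<le> k" and T: "T \<subseteq> VI" "card T = k"
    and y: "y \<in> TS VI k" and nT: "T \<notin> y"
  shows "y \<subseteq> DT VI T"
proof
  fix S assume S: "S \<in> y"
  obtain sh where y': "y = rho_TS VI k sh" using y by (auto simp: TS_def)
  have SG: "S \<in> SG VI" using S y' by (auto simp: rho_TS_def)
  show "S \<in> DT VI T"
  proof (rule ccontr)
    assume "S \<notin> DT VI T"
    hence "T \<subseteq> S" using SG by (auto simp: DT_def)
    hence "T \<in> tuples k S" using T by (auto simp: tuples_def)
    hence Tt: "T \<in> tuples_sh k sh" using S y' by (auto simp: rho_TS_def)
    have "tuples k T = {T}" using T card_eq_sub[OF fin _ T(1)]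
      by (auto simp: tuples_def)
    moreover have "T \<in> SG VI" using T k1 by (auto simp: SG_mem)
    ultimately have "T \<in> y" using Tt y' by (auto simp: rho_TS_def)
    thus False using nT by simp
  qed
qed

lemma TS_top:
  assumes y: "y \<in> TS VI k" and all: "\<forall>T. T \<subseteq> VI \<and> card T = k \<longrightarrow> T \<in> y"
  shows "y = SG VI"
proof
  show "y \<subseteq> SG VI" using y by (rule TS_sub_SG)
  obtain sh where y': "y = rho_TS VI k sh" using y by (auto simp: TS_def)
  show "SG VI \<subseteq> y"
  proof
    fix S assume S: "S \<in> SG VI"
    have "tuples k S \<subseteq> tuples_sh k sh"
    proof
      fix T assume "T \<in> tuples k S"
      hence "T \<subseteq> VI" "card T = k" "T \<in> tuples k T" using S
        by (auto simp: tuples_def SG_mem)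
      hence "T \<in> y" "T \<in> tuples k T" using all by auto
      thus "T \<in> tuples_sh k sh" using y' by (auto simp: rho_TS_def)
    qed
    thus "S \<in> y" using S y' by (auto simp: rho_TS_def)
  qed
qed

lemma DT_ne: "T \<subseteq> VI \<Longrightarrow> T \<noteq> {} \<Longrightarrow> DT VI T \<noteq> SG VI"
  by (auto simp: DT_def SG_mem)

lemma part1:
  assumes fin: "finite VI" and k1: "1 \<le> k" and kn: "k \<le> card VI"
  shows "dAtoms (TS VI k) (SG VI) = DT VI ` {T. T \<subseteq> VI \<and> card T = k}"
proof (rule set_eqI, rule iffI)
  fix x assume x: "x \<in> dAtoms (TS VI k) (SG VI)"
  hence xT: "x \<in> TS VI k" and ne: "x \<noteq> SG VI"
    and mx: "\<forall>y\<in>TS VI k. x \<subseteq> y \<and> y \<subset> SG VI \<longrightarrow> x = y"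
    by (auto simp: dAtoms_def)
  obtain T where T: "T \<subseteq> VI" "card T = k" "T \<notin> x" using TS_top[OF xT] ne by blast
  have sub: "x \<subseteq> DT VI T" using TS_notin[OF fin k1 T(1,2) xT T(3)] .
  have "DT VI T \<in> TS VI k" using DT_in_TS[OF fin k1 T(1,2)] .
  moreover have "DT VI T \<noteq> SG VI" using DT_ne[OF T(1) card_T_nonempty[OF T(2) k1]] .
  moreover have "DT VI T \<subseteq> SG VI" by (rule DT_sub)
  ultimately have "x = DT VI T" using mx sub by (simp add: psubset_eq)
  thus "x \<in> DT VI ` {T. T \<subseteq> VI \<and> card T = k}" using T by blast
next
  fix x assume "x \<in> DT VI ` {T. T \<subseteq> VI \<and> card T = k}"
  then obtain T where T: "T \<subseteq> VI" "card T = k" and xd: "x = DT VI T" by blast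
  have "\<forall>y\<in>TS VI k. x \<subseteq> y \<and> y \<subset> SG VI \<longrightarrow> x = y"
  proof (intro ballI impI)
    fix y assume y: "y \<in> TS VI k" and "x \<subseteq> y \<and> y \<subset> SG VI"
    hence xy: "x \<subseteq> y" and ny: "y \<noteq> SG VI" by auto
    obtain T2 where T2: "T2 \<subseteq> VI" "card T2 = k" "T2 \<notin> y" using TS_top[OF y] ny by blast
    have "T2 \<in> SG VI" using T2 k1 by (auto simp: SG_mem)
    hence "T2 \<notin> DT VI T" using T2(3) xy xd by blast
    hence "T \<subseteq> T2" using \<open>T2 \<in> SG VI\<close> unfolding DT_def by blast
    hence "T = T2" using card_eq_sub[OF fin _ T2(1)] T T2 by simp
    hence "y \<subseteq> x" using TS_notin[OF fin k1 T y] T2 xd by simp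
    thus "x = y" using xy by simp
  qed
  moreover have "x \<noteq> SG VI" using DT_ne[OF T(1) card_T_nonempty[OF T(2) k1]] xd by simp
  ultimately show "x \<in> dAtoms (TS VI k) (SG VI)"
    using DT_in_TS[OF fin k1 T] xd unfolding dAtoms_def by blast
qed


lemma rho_TSD_sub: "rho_TSD VI k sh \<subseteq> SG VI"
  by (auto simp: rho_TSD_def)

lemma sh_sub_rho: "sh \<subseteq> SG VI \<Longrightarrow> sh \<subseteq> rho_TSD VI k sh"
  unfolding rho_TSD_def by blast

lemma TSD_fix:
  assumes x: "x \<in> TSD VI k"
  shows "rho_TSD VI k x = x" "x \<subseteq> SG VI"
proof -
  obtain s0 where s0: "s0 \<subseteq> SG VI" and xd: "x = rho_TSD VI k s0"
    using x by (auto simp: TSD_def SH_def)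
  show xs: "x \<subseteq> SG VI" using xd rho_TSD_sub by blast
  have "rho_TSD VI k x \<subseteq> x"
  proof
    fix S assume S: "S \<in> rho_TSD VI k x"
    hence SG: "S \<in> SG VI" and c: "\<And>T. T \<subseteq> S \<Longrightarrow> card T < k \<Longrightarrow> S = \<Union>{U \<in> x. T \<subseteq> U \<and> U \<subseteq> S}"
      by (auto simp: rho_TSD_def)
    have "S = \<Union>{V \<in> s0. T \<subseteq> V \<and> V \<subseteq> S}" if T: "T \<subseteq> S" "card T < k" for T
    proof
      show "\<Union>{V \<in> s0. T \<subseteq> V \<and> V \<subseteq> S} \<subseteq> S" by blast
      show "S \<subseteq> \<Union>{V \<in> s0. T \<subseteq> V \<and> V \<subseteq> S}"
      proof
        fix a assume "a \<in> S"
        then obtain U where U: "U \<in> x" "T \<subseteq> U" "U \<subseteq> S" "a \<in> U" using c[OF T] by blast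
        have "U = \<Union>{V \<in> s0. T \<subseteq> V \<and> V \<subseteq> U}" using U(1,2) T(2) xd unfolding rho_TSD_def by blast
        then obtain V where "V \<in> s0" "T \<subseteq> V" "V \<subseteq> U" "a \<in> V" using U(4) by blast
        thus "a \<in> \<Union>{V \<in> s0. T \<subseteq> V \<and> V \<subseteq> S}" using U(3) by blast
      qed
    qed
    thus "S \<in> x" using SG xd by (auto simp: rho_TSD_def)
  qed
  thus "rho_TSD VI k x = x" using sh_sub_rho[OF xs] by blast
qed

lemma fix_TSD: "x \<subseteq> SG VI \<Longrightarrow> rho_TSD VI k x = x \<Longrightarrow> x \<in> TSD VI k"
  unfolding TSD_def SH_def by (rule image_eqI[of x "rho_TSD VI k" x]) auto

lemma L:
  assumes fin: "finite VI" and k1: "1 \<le> k" and kn: "k \<le> card VI" and x: "x \<in> TSD VI k"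
    and all: "\<forall>T. T \<subseteq> VI \<and> card T = k \<longrightarrow> (\<exists>S\<in>x. T \<subseteq> S)"
  shows "VI \<in> x"
proof -
  have xs: "x \<subseteq> SG VI" and fx: "rho_TSD VI k x = x" using TSD_fix[OF x] by auto
  have "VI \<noteq> {}" using k1 kn by auto
  hence "VI \<in> SG VI" by (auto simp: SG_mem)
  moreover have "VI = \<Union>{U \<in> x. T \<subseteq> U \<and> U \<subseteq> VI}" if T: "T \<subseteq> VI" "card T < k" for T
  proof
    show "\<Union>{U \<in> x. T \<subseteq> U \<and> U \<subseteq> VI} \<subseteq> VI" by blast
    show "VI \<subseteq> \<Union>{U \<in> x. T \<subseteq> U \<and> U \<subseteq> VI}"
    proof
      fix a assume a: "a \<in> VI"
      have fT: "finite T" using T fin finite_subset by blast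
      have "card (insert a T) \<le> Suc (card T)" using fT by (simp add: card_insert_if)
      hence "card (insert a T) \<le> k" using T(2) by linarith
      moreover have "insert a T \<subseteq> VI" using a T by blast
      ultimately obtain B where B: "insert a T \<subseteq> B" "B \<subseteq> VI" "card B = k"
        using exists_subset_between[OF _ kn _ fin] by blast
      then obtain S where "S \<in> x" "B \<subseteq> S" using all by blast
      moreover have "S \<in> SG VI" using \<open>S \<in> x\<close> xs by blast
      hence "S \<subseteq> VI" by (simp add: SG_mem)
      ultimately show "a \<in> \<Union>{U \<in> x. T \<subseteq> U \<and> U \<subseteq> VI}" using B by blast
    qed
  qed
  ultimately have "VI \<in> rho_TSD VI k x" by (auto simp: rho_TSD_def)
  thus ?thesis using fx by simp
qed

lemma DT_TSD:
  assumes fin: "finite VI" and k1: "1 \<le> k" and T: "T \<subseteq> VI" "card T = k"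
  shows "DT VI T \<in> TSD VI k"
proof (rule fix_TSD[OF DT_sub])
  have "rho_TSD VI k (DT VI T) \<subseteq> DT VI T"
  proof
    fix S assume S: "S \<in> rho_TSD VI k (DT VI T)"
    hence SG: "S \<in> SG VI" and c: "\<And>T'. T' \<subseteq> S \<Longrightarrow> card T' < k \<Longrightarrow> S = \<Union>{U \<in> DT VI T. T' \<subseteq> U \<and> U \<subseteq> S}"
      by (auto simp: rho_TSD_def)
    show "S \<in> DT VI T"
    proof (rule ccontr)
      assume "S \<notin> DT VI T"
      hence TS: "T \<subseteq> S" using SG by (auto simp: DT_def)
      obtain t where t: "t \<in> T" using T k1 by fastforce
      have fT: "finite T" using T fin finite_subset by blast
      have "T - {t} \<subseteq> S" using TS by blast
      moreover have "card (T - {t}) < k" using t fT T k1 by (simp add: card_Diff_singleton)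
      ultimately have eq: "S = \<Union>{U \<in> DT VI T. T - {t} \<subseteq> U \<and> U \<subseteq> S}" by (rule c)
      have "t \<in> S" using t TS by blast
      then obtain U where "U \<in> DT VI T" "T - {t} \<subseteq> U" "t \<in> U" using eq by blast
      thus False by (auto simp: DT_def)
    qed
  qed
  thus "rho_TSD VI k (DT VI T) = DT VI T" using sh_sub_rho[OF DT_sub] by blast
qed

lemma ins_TSD:
  assumes x: "x \<in> TSD VI k" and ne: "VI \<noteq> {}"
  shows "insert VI x \<in> TSD VI k"
proof -
  have xs: "x \<subseteq> SG VI" and fx: "rho_TSD VI k x = x" using TSD_fix[OF x] by auto
  have VS: "VI \<in> SG VI" using ne by (auto simp: SG_mem)
  have ins: "insert VI x \<subseteq> SG VI" using xs VS by blast
  have "rho_TSD VI k (insert VI x) \<subseteq> insert VI x"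
  proof
    fix S assume S: "S \<in> rho_TSD VI k (insert VI x)"
    show "S \<in> insert VI x"
    proof (cases "S = VI")
      case False
      have SG: "S \<in> SG VI" and
        c: "\<And>T. T \<subseteq> S \<Longrightarrow> card T < k \<Longrightarrow> S = \<Union>{U \<in> insert VI x. T \<subseteq> U \<and> U \<subseteq> S}"
        using S unfolding rho_TSD_def by blast+
      have nV: "\<not> VI \<subseteq> S" using SG False by (auto simp: SG_mem)
      have eq: "{U \<in> insert VI x. T \<subseteq> U \<and> U \<subseteq> S} = {U \<in> x. T \<subseteq> U \<and> U \<subseteq> S}" for T
        using nV by blast
      have "S = \<Union>{U \<in> x. T \<subseteq> U \<and> U \<subseteq> S}" if "T \<subseteq> S" "card T < k" for T
        using c[OF that] eq[of T] by simp
      hence "S \<in> rho_TSD VI k x" using SG unfolding rho_TSD_def by blast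
      thus ?thesis using fx by simp
    qed simp
  qed
  hence "rho_TSD VI k (insert VI x) = insert VI x" using sh_sub_rho[OF ins] by (rule subset_antisym)
  thus ?thesis using fix_TSD[OF ins] by simp
qed

lemma part2:
  assumes fin: "finite VI" and k1: "1 \<le> k" and kn: "k \<le> card VI"
  shows "{sh \<in> MI (TSD VI k). VI \<notin> sh} = DT VI ` {T. T \<subseteq> VI \<and> card T = k}"
proof (rule set_eqI, rule iffI)
  have ne: "VI \<noteq> {}" using k1 kn by auto
  fix x assume "x \<in> {sh \<in> MI (TSD VI k). VI \<notin> sh}"
  hence x: "x \<in> TSD VI k" and nV: "VI \<notin> x"
    and mi: "\<forall>y\<in>TSD VI k. \<forall>z\<in>TSD VI k. is_meet_in (TSD VI k) x y z \<longrightarrow> x = y \<or> x = z"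
    by (auto simp: MI_def)
  obtain T where T: "T \<subseteq> VI" "card T = k" and nT: "\<forall>S\<in>x. \<not> T \<subseteq> S"
    using L[OF fin k1 kn x] nV by blast
  have xs: "x \<subseteq> SG VI" using TSD_fix[OF x] by simp
  have sub: "x \<subseteq> DT VI T" using xs nT by (auto simp: DT_def)
  have VD: "VI \<notin> DT VI T" using T by (auto simp: DT_def)
  have "is_meet_in (TSD VI k) x (DT VI T) (insert VI x)"
    unfolding is_meet_in_def using x sub VD by blast
  hence "x = DT VI T \<or> x = insert VI x"
    using mi DT_TSD[OF fin k1 T] ins_TSD[OF x ne] by blast
  hence "x = DT VI T" using nV by blast
  thus "x \<in> DT VI ` {T. T \<subseteq> VI \<and> card T = k}" using T by blast
next
  have ne: "VI \<noteq> {}" using k1 kn by auto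
  fix x assume "x \<in> DT VI ` {T. T \<subseteq> VI \<and> card T = k}"
  then obtain T where T: "T \<subseteq> VI" "card T = k" and xd: "x = DT VI T" by blast
  have xT: "x \<in> TSD VI k" using DT_TSD[OF fin k1 T] xd by simp
  have VD: "VI \<notin> x" using T xd by (auto simp: DT_def)
  have up: "VI \<in> y" if y: "y \<in> TSD VI k" "x \<subseteq> y" "x \<noteq> y" for y
  proof -
    obtain Sy where Sy: "Sy \<in> y" "Sy \<notin> x" using y by blast
    have "Sy \<in> SG VI" using Sy TSD_fix[OF y(1)] by blast
    hence TSy: "T \<subseteq> Sy" using Sy xd by (auto simp: DT_def)
    have "\<forall>T2. T2 \<subseteq> VI \<and> card T2 = k \<longrightarrow> (\<exists>S\<in>y. T2 \<subseteq> S)"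
    proof (intro allI impI)
      fix T2 assume T2: "T2 \<subseteq> VI \<and> card T2 = k"
      show "\<exists>S\<in>y. T2 \<subseteq> S"
      proof (cases "T = T2")
        case True thus ?thesis using TSy Sy by blast
      next
        case False
        hence "\<not> T \<subseteq> T2" using card_eq_sub[OF fin _ _] T T2 by metis
        moreover have "T2 \<in> SG VI" using T2 k1 by (auto simp: SG_mem)
        ultimately have "T2 \<in> y" using y xd by (auto simp: DT_def)
        thus ?thesis by blast
      qed
    qed
    thus ?thesis using L[OF fin k1 kn y(1)] by blast
  qed
  have "x = y \<or> x = z" if y: "y \<in> TSD VI k" and z: "z \<in> TSD VI k"
    and m: "is_meet_in (TSD VI k) x y z" for y z
  proof (rule ccontr)
    assume "\<not> (x = y \<or> x = z)"
    hence "VI \<in> y" "VI \<in> z" using up y z m by (auto simp: is_meet_in_def)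
    hence "insert VI x \<subseteq> y" "insert VI x \<subseteq> z" using m by (auto simp: is_meet_in_def)
    hence "insert VI x \<subseteq> x" using m ins_TSD[OF xT ne] by (auto simp: is_meet_in_def)
    thus False using VD by blast
  qed
  thus "x \<in> {sh \<in> MI (TSD VI k). VI \<notin> sh}" using xT VD by (auto simp: MI_def)
qed

theorem corollary4p4:
  fixes VI :: "'a set" and n k :: nat
  assumes "finite VI" and "card VI = n" and "1 \<le> k" and "k \<le> n"
  shows "dAtoms (TS VI k) (SG VI) = {sh \<in> MI (TSD VI k). VI \<notin> sh}"
  using part1[of VI k] part2[of VI k] assms by simp

end
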